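(* Let $(T,\leq)$ be an ordered set and let $T^\ast$ be its ultrapower with respect to an ultrafilter $\mathcal{U}$ on $\mathbb{N}$. The following are equivalent: (a) $T$ is dense everywhere, i.e. for all $a,b \in T$ with $a < b$ there exists $c \in T$ with $a < c < b$; (b) whenever $a_k = ((a_k)_n)$ and $b_k = ((b_k)_n)$ ($k\in\mathbb{N}$) are sequences in $T$ such that for every $k \in \mathbb{N}$ \[ \overline{a_k} \leq \overline{a_{k+1}} < \overline{b_{k+1}} \leq \overline{b_k}, \] then \[ \bigcap_{k\in\mathbb{N}} \, ]\overline{a_k}, \overline{b_k}[ \, \neq \emptyset, \] where $]x,y[ = \{ z \in T^\ast : x < z < y\}$.
   Context: An ordered set is a nonempty set with a reflexive, antisymmetric, transitive and linear (total) relation $\leq$. An ultrafilter on $\mathbb{N}$ is a nonempty family $\mathcal{U}$ of subsets of $\mathbb{N}$ such that: (1) $K \in \mathcal{U}$, $K \subset L \subset \mathbb{N}$ imply $L \in \mathcal{U}$; (2) $K,L \in \mathcal{U}$ imply $K\cap L \in \mathcal{U}$; (3) every $K \in \mathcal{U}$ is infinite; (4) for every $K \subset \mathbb{N}$, $K \in \mathcal{U}$ or $\mathbb{N}\setminus K \in \mathcal{U}$. The ultrapower $T^\ast$: on the set $\mathcal{T}$ of all sequences $(a_n):\mathbb{N}\to T$ define $(a_n)\sim(b_n)$ iff $\{n : a_n = b_n\} \in \mathcal{U}$; this is an equivalence relation, $T^\ast$ is the set of its classes, $\overline{(a_n)}$ denotes the class of $(a_n)$, and $T^\ast$ is ordered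 by $\overline{(a_n)} \leq \overline{(b_n)}$ iff $\{ n : a_n \leq b_n\} \in \mathcal{U}$ (a well-defined total order); $<$ denotes the corresponding strict order. *)

theory Defs
  imports Main
begin

text \<open>Ultrafilter on the naturals, exactly as in the paper (all members infinite,
 so it is a free ultrafilter).\<close>
definition ultrafilter_nat :: "nat set set \<Rightarrow> bool" where
  "ultrafilter_nat U \<longleftrightarrow>
     U \<noteq> {} \<and>
     (\<forall>K L. K \<in> U \<and> K \<subseteq> L \<longrightarrow> L \<in> U) \<and>
     (\<forall>K L. K \<in> U \<and> L \<in> U \<longrightarrow> K \<inter> L \<in> U) \<and>
     (\<forall>K \<in> U. infinite K) \<and>
     (\<forall>K. K \<in> U \<or> (UNIV - K) \<in> U)"

definition useq_rel :: "nat set set \<Rightarrow> ((nat \<Rightarrow> 'a) \<times> (nat \<Rightarrow> 'a)) set" where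
  "useq_rel U = {(a, b). {n. a n = b n} \<in> U}"

definition ultrapower :: "nat set set \<Rightarrow> (nat \<Rightarrow> 'a) set set" where
  "ultrapower U = (UNIV :: (nat \<Rightarrow> 'a) set) // useq_rel U"

definition ucls :: "nat set set \<Rightarrow> (nat \<Rightarrow> 'a) \<Rightarrow> (nat \<Rightarrow> 'a) set" where
  "ucls U a = useq_rel U `` {a}"

definition uleq :: "nat set set \<Rightarrow> (nat \<Rightarrow> 'a::linorder) set \<Rightarrow> (nat \<Rightarrow> 'a) set \<Rightarrow> bool" where
  "uleq U X Y \<longleftrightarrow> (\<exists>a \<in> X. \<exists>b \<in> Y. {n. a n \<le> b n} \<in> U)"

definition uless :: "nat set set \<Rightarrow> (nat \<Rightarrow> 'a::linorder) set \<Rightarrow> (nat \<Rightarrow> 'a) set \<Rightarrow> bool" where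
  "uless U X Y \<longleftrightarrow> uleq U X Y \<and> X \<noteq> Y"

definition uopen_interval :: "nat set set \<Rightarrow> (nat \<Rightarrow> 'a::linorder) set \<Rightarrow> (nat \<Rightarrow> 'a) set
    \<Rightarrow> (nat \<Rightarrow> 'a) set set" where
  "uopen_interval U X Y = {Z \<in> ultrapower U. uless U X Z \<and> uless U Z Y}"

end

theory Submission
  imports Defs
begin

lemma uf_up: "ultrafilter_nat U \<Longrightarrow> K \<in> U \<Longrightarrow> K \<subseteq> L \<Longrightarrow> L \<in> U"
  unfolding ultrafilter_nat_def by blast
lemma uf_int: "ultrafilter_nat U \<Longrightarrow> K \<in> U \<Longrightarrow> L \<in> U \<Longrightarrow> K \<inter> L \<in> U"
  unfolding ultrafilter_nat_def by blast
lemma uf_inf: "ultrafilter_nat U \<Longrightarrow> K \<in> U \<Longrightarrow> infinite K"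
  unfolding ultrafilter_nat_def by blast
lemma uf_ult: "ultrafilter_nat U \<Longrightarrow> K \<notin> U \<Longrightarrow> (UNIV - K) \<in> U"
  unfolding ultrafilter_nat_def by blast
lemma uf_univ: "ultrafilter_nat U \<Longrightarrow> UNIV \<in> U"
  unfolding ultrafilter_nat_def by blast
lemma uf_cofin: assumes "ultrafilter_nat U" shows "{k::nat..} \<in> U"
proof (rule ccontr)
  assume "{k..} \<notin> U"
  then have "UNIV - {k..} \<in> U" using uf_ult[OF assms] by blast
  moreover have "UNIV - {k..} = {..<k}" by auto
  ultimately show False using uf_inf[OF assms] by auto
qed

lemma mem_ucls: "x \<in> ucls U y \<longleftrightarrow> {n. y n = x n} \<in> U"
  unfolding ucls_def useq_rel_def by auto

lemma ucls_eq: assumes U: "ultrafilter_nat U"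
  shows "ucls U x = ucls U y \<longleftrightarrow> {n. x n = y n} \<in> U"
proof
  assume e: "ucls U x = ucls U y"
  have "y \<in> ucls U y" using uf_univ[OF U] by (simp add: mem_ucls)
  then have "y \<in> ucls U x" using e by simp
  then show "{n. x n = y n} \<in> U" by (simp add: mem_ucls)
next
  assume h: "{n. x n = y n} \<in> U"
  have "z \<in> ucls U x \<longleftrightarrow> z \<in> ucls U y" for z
  proof
    assume "z \<in> ucls U x"
    then have "{n. x n = z n} \<in> U" by (simp add: mem_ucls)
    from uf_int[OF U this h] have "{n. x n = z n} \<inter> {n. x n = y n} \<in> U" .
    then show "z \<in> ucls U y" by (simp add: mem_ucls) (erule uf_up[OF U], auto)
  next
    assume "z \<in> ucls U y"
    then have "{n. y n = z n} \<in> U" by (simp add: mem_ucls)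
    from uf_int[OF U this h] have "{n. y n = z n} \<inter> {n. x n = y n} \<in> U" .
    then show "z \<in> ucls U x" by (simp add: mem_ucls) (erule uf_up[OF U], auto)
  qed
  then show "ucls U x = ucls U y" by blast
qed

lemma uleq_iff: assumes U: "ultrafilter_nat U"
  shows "uleq U (ucls U x) (ucls U y) \<longleftrightarrow> {n. x n \<le> y n} \<in> U"
proof
  assume "uleq U (ucls U x) (ucls U y)"
  then obtain a b where a: "a \<in> ucls U x" and b: "b \<in> ucls U y" and ab: "{n. a n \<le> b n} \<in> U"
    unfolding uleq_def by blast
  have "{n. x n = a n} \<inter> {n. y n = b n} \<inter> {n. a n \<le> b n} \<in> U"
    using a b ab by (simp add: mem_ucls uf_int[OF U])
  then show "{n. x n \<le> y n} \<in> U" by (rule uf_up[OF U]) auto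
next
  assume "{n. x n \<le> y n} \<in> U"
  moreover have "x \<in> ucls U x" "y \<in> ucls U y" using uf_univ[OF U] by (simp_all add: mem_ucls)
  ultimately show "uleq U (ucls U x) (ucls U y)" unfolding uleq_def by blast
qed

lemma uless_iff: assumes U: "ultrafilter_nat U"
  shows "uless U (ucls U x) (ucls U y) \<longleftrightarrow> {n. x n < y n} \<in> U"
proof
  assume "uless U (ucls U x) (ucls U y)"
  then have 1: "{n. x n \<le> y n} \<in> U" and 2: "{n. x n = y n} \<notin> U"
    unfolding uless_def by (auto simp: uleq_iff[OF U] ucls_eq[OF U])
  from uf_int[OF U 1 uf_ult[OF U 2]] show "{n. x n < y n} \<in> U"
    by (rule uf_up[OF U]) auto
next
  assume h: "{n. x n < y n} \<in> U"
  have "{n. x n \<le> y n} \<in> U" using h by (rule uf_up[OF U]) auto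
  moreover have "{n. x n = y n} \<notin> U"
  proof
    assume "{n. x n = y n} \<in> U"
    from uf_int[OF U this h] have "{} \<in> U" by (metis (mono_tags, lifting) disjoint_iff less_irrefl mem_Collect_eq)
    then show False using uf_inf[OF U] by blast
  qed
  ultimately show "uless U (ucls U x) (ucls U y)"
    unfolding uless_def by (auto simp: uleq_iff[OF U] ucls_eq[OF U])
qed

lemma ucls_in: "ucls U z \<in> ultrapower U"
  unfolding ultrapower_def ucls_def by (rule quotientI) simp

lemma ultrapower_cls: "Z \<in> ultrapower U \<Longrightarrow> \<exists>z. Z = ucls U z"
  unfolding ultrapower_def ucls_def by (erule quotientE) blast

fun KK :: "(nat \<Rightarrow> nat \<Rightarrow> 'a::linorder) \<Rightarrow> (nat \<Rightarrow> nat \<Rightarrow> 'a) \<Rightarrow> nat \<Rightarrow> nat set" where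
  "KK a b 0 = {n. a 0 n < b 0 n}"
| "KK a b (Suc k) = KK a b k \<inter> {n. a k n \<le> a (Suc k) n} \<inter> {n. a (Suc k) n < b (Suc k) n}
     \<inter> {n. b (Suc k) n \<le> b k n}"

lemma KK_mono: "j \<le> m \<Longrightarrow> KK a b m \<subseteq> KK a b j"
  by (induction m) (auto simp: le_Suc_eq)

lemma KK_prop: "n \<in> KK a b m \<Longrightarrow> j \<le> m \<Longrightarrow> a j n \<le> a m n \<and> a m n < b m n \<and> b m n \<le> b j n"
proof (induction m arbitrary: j)
  case 0 then show ?case by auto
next
  case (Suc m)
  show ?case
  proof (cases "j = Suc m")
    case True then show ?thesis using Suc by auto
  next
    case False
    then have "j \<le> m" using Suc by auto
    with Suc show ?thesis by (auto intro: order_trans)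
  qed
qed

theorem mainTheorem4:
  fixes U :: "nat set set"
  assumes "ultrafilter_nat U"
  shows "(\<forall>x y :: 'a::linorder. x < y \<longrightarrow> (\<exists>c. x < c \<and> c < y)) \<longleftrightarrow>
    (\<forall>a b :: nat \<Rightarrow> nat \<Rightarrow> 'a.
       (\<forall>k. uleq U (ucls U (a k)) (ucls U (a (Suc k))) \<and>
            uless U (ucls U (a (Suc k))) (ucls U (b (Suc k))) \<and>
            uleq U (ucls U (b (Suc k))) (ucls U (b k)))
       \<longrightarrow> (\<Inter>k. uopen_interval U (ucls U (a k)) (ucls U (b k))) \<noteq> {})"
proof (intro iffI allI impI)
  fix a b :: "nat \<Rightarrow> nat \<Rightarrow> 'a"
  assume dense: "\<forall>x y :: 'a. x < y \<longrightarrow> (\<exists>c. x < c \<and> c < y)"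
  assume hyp: "\<forall>k. uleq U (ucls U (a k)) (ucls U (a (Suc k))) \<and>
            uless U (ucls U (a (Suc k))) (ucls U (b (Suc k))) \<and>
            uleq U (ucls U (b (Suc k))) (ucls U (b k))"
  have h1: "{n. a k n \<le> a (Suc k) n} \<in> U" for k using hyp uleq_iff[OF assms] by blast
  have h2: "{n. a (Suc k) n < b (Suc k) n} \<in> U" for k using hyp uless_iff[OF assms] by blast
  have h3: "{n. b (Suc k) n \<le> b k n} \<in> U" for k using hyp uleq_iff[OF assms] by blast
  have KU: "KK a b k \<in> U" for k
  proof (induction k)
    case 0
    have "{n. a 0 n \<le> a 1 n} \<inter> {n. a 1 n < b 1 n} \<inter> {n. b 1 n \<le> b 0 n} \<in> U"
      using h1[of 0] h2[of 0] h3[of 0] by (simp add: uf_int[OF assms])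
    then show ?case by (rule uf_up[OF assms]) auto
  next
    case (Suc k)
    then show ?case using h1[of k] h2[of k] h3[of k] by (simp add: uf_int[OF assms])
  qed
  define m where "m n = Max {k. k \<le> n \<and> n \<in> KK a b k}" for n
  define z where "z n = (if n \<in> KK a b 0 then SOME c. a (m n) n < c \<and> c < b (m n) n else a 0 n)" for n
  have key: "a k n < z n \<and> z n < b k n" if n: "n \<in> KK a b k \<inter> {k..}" for k n
  proof -
    have n0: "n \<in> KK a b 0" using n KK_mono[of 0 k a b] by auto
    have fin: "finite {k. k \<le> n \<and> n \<in> KK a b k}" by auto
    have kin: "k \<in> {k. k \<le> n \<and> n \<in> KK a b k}" using n by auto
    have km: "k \<le> m n" unfolding m_def using Max_ge[OF fin kin] .
    have nm: "n \<in> KK a b (m n)" unfolding m_def using Max_in[OF fin] kin by blast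
    from KK_prop[OF nm km] have p: "a k n \<le> a (m n) n" "a (m n) n < b (m n) n" "b (m n) n \<le> b k n"
      by auto
    have "a (m n) n < z n \<and> z n < b (m n) n"
    proof -
      obtain c where "a (m n) n < c \<and> c < b (m n) n" using dense p(2) by blast
      then have "a (m n) n < (SOME c. a (m n) n < c \<and> c < b (m n) n) \<and> (SOME c. a (m n) n < c \<and> c < b (m n) n) < b (m n) n"
        by (rule someI)
      then show ?thesis unfolding z_def using n0 by simp
    qed
    with p show ?thesis by (auto intro: le_less_trans less_le_trans)
  qed
  have "ucls U z \<in> uopen_interval U (ucls U (a k)) (ucls U (b k))" for k
  proof -
    have S: "KK a b k \<inter> {k..} \<in> U" using KU uf_cofin[OF assms] uf_int[OF assms] by blast
    have "{n. a k n < z n} \<in> U" using S by (rule uf_up[OF assms]) (use key in blast)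
    moreover have "{n. z n < b k n} \<in> U" using S by (rule uf_up[OF assms]) (use key in blast)
    ultimately show ?thesis unfolding uopen_interval_def
      by (simp add: ucls_in uless_iff[OF assms])
  qed
  then show "(\<Inter>k. uopen_interval U (ucls U (a k)) (ucls U (b k))) \<noteq> {}" by blast
next
  fix x y :: 'a
  assume H: "\<forall>a b :: nat \<Rightarrow> nat \<Rightarrow> 'a.
       (\<forall>k. uleq U (ucls U (a k)) (ucls U (a (Suc k))) \<and>
            uless U (ucls U (a (Suc k))) (ucls U (b (Suc k))) \<and>
            uleq U (ucls U (b (Suc k))) (ucls U (b k)))
       \<longrightarrow> (\<Inter>k. uopen_interval U (ucls U (a k)) (ucls U (b k))) \<noteq> {}"
  assume xy: "x < y"
  let ?a = "\<lambda>k n. x" and ?b = "\<lambda>k n. y"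
  have "\<forall>k. uleq U (ucls U (?a k)) (ucls U (?a (Suc k))) \<and>
            uless U (ucls U (?a (Suc k))) (ucls U (?b (Suc k))) \<and>
            uleq U (ucls U (?b (Suc k))) (ucls U (?b k))"
    using xy uf_univ[OF assms] by (simp add: uleq_iff[OF assms] uless_iff[OF assms])
  with H[rule_format, of ?a ?b] have "(\<Inter>k. uopen_interval U (ucls U (?a k)) (ucls U (?b k))) \<noteq> {}" by simp
  then obtain Z where "Z \<in> uopen_interval U (ucls U (\<lambda>n. x)) (ucls U (\<lambda>n. y))" by auto
  then obtain z where "uless U (ucls U (\<lambda>n. x)) (ucls U z)" "uless U (ucls U z) (ucls U (\<lambda>n. y))"
    unfolding uopen_interval_def using ultrapower_cls by blast
  then have "{n. x < z n} \<in> U" "{n. z n < y} \<in> U" by (simp_all add: uless_iff[OF assms])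
  from uf_int[OF assms this] have "{n. x < z n} \<inter> {n. z n < y} \<in> U" .
  then have "{n. x < z n} \<inter> {n. z n < y} \<noteq> {}" using uf_inf[OF assms] by fastforce
  then show "\<exists>c. x < c \<and> c < y" by blast
qed

end
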